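(* Let $n,m\in\mathbb Z$ and $k\le n+m$. Then, in $\mathbb C_w[x,x^{-1},y,y^{-1}]$, \[ \binom{n+m}{k}_w=\sum_{j=k-m}^{n}\binom{n}{j}_w\Big(x^jy^{n-j}\,\binom{m}{k-j}_w\,y^{j-n}x^{-j}\Big)\prod_{i=1}^{k-j}W(i+j,n-j), \] and this is an identity in the commutative ring $\mathbb C[(w(s,t))_{s,t\in\mathbb Z}]$ (after evaluating the conjugations).
   Context: Let $(w(s,t))_{s,t\in\mathbb Z}$ be commuting invertible variables, and $\mathbb C_w[x,x^{-1},y,y^{-1}]$ the associative unital $\mathbb C$-algebra generated by $x^{\pm1},y^{\pm1}$ and the $w(s,t)^{\pm1}$ subject to $x^{-1}x=xx^{-1}=1$, $y^{-1}y=yy^{-1}=1$, $yx=w(1,1)xy$, $x\,w(s,t)=w(s+1,t)x$, $y\,w(s,t)=w(s,t+1)y$. (Consequently $x^jy^{n-j}fy^{j-n}x^{-j}$ is $f$ with each $w(s,t)$ replaced by $w(s+j,t+n-j)$.) Sums $\sum_{j=u}^v$ with $v<u$ are interpreted by the convention $\sum_{j=l}^m A_j=A_l+\dots+A_m$ if $m>l-1$, $0$ if $m=l-1$, $-A_{l-1}-\dots-A_{m+1}$ if $m<l-1$. Product convention: $\prod_{j=l}^m A_j=A_l\cdots A_m$ if $m>l-1$, $=1$ if $m=l-1$, $=A_{l-1}^{-1}\cdots A_{m+1}^{-1}$ if $m<l-1$. $W(s,t)=\prod_{j=1}^tw(s,j)$. $\binom nk_w$ ($n,k\in\mathbb Z$)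 is the unique family with $\binom n0_w=\binom nn_w=1$ for all $n$ and $\binom{n+1}{k}_w=\binom nk_w+\binom n{k-1}_wW(k,n+1-k)$ whenever $(n+1,k)\ne(0,0)$. *)

theory Defs
  imports Complex_Main
begin

definition gsum :: "(int \<Rightarrow> 'a::ab_group_add) \<Rightarrow> int \<Rightarrow> int \<Rightarrow> 'a" where
  "gsum A l m = (if m \<ge> l - 1 then (\<Sum>j\<in>{l..m}. A j) else - (\<Sum>j\<in>{m+1..l-1}. A j))"

definition gprod :: "(int \<Rightarrow> 'a::field) \<Rightarrow> int \<Rightarrow> int \<Rightarrow> 'a" where
  "gprod A l m = (if m \<ge> l - 1 then (\<Prod>j\<in>{l..m}. A j) else inverse (\<Prod>j\<in>{m+1..l-1}. A j))"

definition WW :: "(int \<Rightarrow> int \<Rightarrow> 'a::field) \<Rightarrow> int \<Rightarrow> int \<Rightarrow> 'a" where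
  "WW w s t = gprod (\<lambda>j. w s j) 1 t"

definition is_wbinom_family :: "(int \<Rightarrow> int \<Rightarrow> 'a::field) \<Rightarrow> (int \<Rightarrow> int \<Rightarrow> 'a) \<Rightarrow> bool" where
  "is_wbinom_family w B \<longleftrightarrow>
     (\<forall>n. B n 0 = 1 \<and> B n n = 1) \<and>
     (\<forall>n k. (n + 1, k) \<noteq> (0, 0) \<longrightarrow> B (n + 1) k = B n k + B n (k - 1) * WW w k (n + 1 - k))"

definition wbinom :: "(int \<Rightarrow> int \<Rightarrow> 'a::field) \<Rightarrow> int \<Rightarrow> int \<Rightarrow> 'a" where
  "wbinom w = (THE B. is_wbinom_family w B)"

end

theory Submission
  imports Defs
begin


lemma ivl_int_top: "l \<le> u + 1 \<Longrightarrow> {l..u+1} = insert (u+1) {l..u::int}"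
  by auto

lemma gsum_step: "gsum A l (u+1) = gsum A l u + A (u+1)"
proof -
  consider "u \<ge> l - 1" | "u = l - 2" | "u < l - 2" by linarith
  then show ?thesis
  proof cases
    case 1
    then have "{l..u+1} = insert (u+1) {l..u}" by auto
    then show ?thesis using 1 by (simp add: gsum_def add.commute)
  next
    case 2
    then have "{u+1..l-1} = {u+1}" by auto
    then show ?thesis using 2 by (simp add: gsum_def)
  next
    case 3
    then have "{u+1..l-1} = insert (u+1) {2+u..l-1}" by auto
    then show ?thesis using 3 by (simp add: gsum_def)
  qed
qed

lemma gsum_empty: "gsum A l (l - 1) = 0"
  by (simp add: gsum_def)

lemma gsum_split: "gsum A l u = gsum A 0 u - gsum A 0 (l - 1)"
proof (induction u rule: int_induct[where k="l - 1"])
  case base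
  then show ?case by (simp add: gsum_empty)
next
  case (step1 i)
  then show ?case using gsum_step[of A l i] gsum_step[of A 0 i] by simp
next
  case (step2 i)
  then show ?case using gsum_step[of A l "i - 1"] gsum_step[of A 0 "i - 1"] by simp
qed

lemma gsum_low: "gsum A (l - 1) u = A (l - 1) + gsum A l u"
proof -
  have 1: "gsum A (l-1) u = gsum A 0 u - gsum A 0 (l-2)" using gsum_split[of A "l-1" u] by simp
  have 2: "gsum A l u = gsum A 0 u - gsum A 0 (l-1)" using gsum_split[of A l u] by simp
  have 3: "gsum A 0 (l-1) = gsum A 0 (l-2) + A(l-1)" using gsum_step[of A 0 "l-2"] by simp
  show ?thesis by (simp add: 1 2 3 algebra_simps)
qed

lemma gsum_add: "gsum (\<lambda>j. A j + B j) l u = gsum A l u + gsum B l u"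
  by (simp add: gsum_def sum.distrib)

lemma gsum_diff: "gsum (\<lambda>j. A j - B j) l u = gsum A l u - gsum B l u"
  by (simp add: gsum_def sum_subtractf)

lemma gsum_cmult: "gsum (\<lambda>j. c * A j) l u = (c::'a::comm_ring) * gsum A l u"
  by (simp add: gsum_def sum_distrib_left)

lemma gsum_cong: "(\<And>j. A j = B j) \<Longrightarrow> gsum A l u = gsum B l u"
  by (simp add: gsum_def)

lemma gsum_delta: "k \<le> u \<Longrightarrow> gsum (\<lambda>j. if j = k then c else 0) k u = c"
  by (simp add: gsum_def)

lemma gsum_single: "gsum A l l = A l"
  by (simp add: gsum_def)

lemma gprod_nz: "(\<And>j. A j \<noteq> 0) \<Longrightarrow> gprod A l u \<noteq> 0"
  by (simp add: gprod_def)

lemma gprod_step: "(\<And>j. A j \<noteq> 0) \<Longrightarrow> gprod A l (u+1) = gprod A l u * A (u+1)"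
proof -
  assume nz: "\<And>j. A j \<noteq> 0"
  consider "u \<ge> l - 1" | "u = l - 2" | "u < l - 2" by linarith
  then show ?thesis
  proof cases
    case 1
    then have "{l..u+1} = insert (u+1) {l..u}" by auto
    then show ?thesis using 1 by (simp add: gprod_def mult.commute)
  next
    case 2
    then have "{u+1..l-1} = {u+1}" by auto
    then show ?thesis using 2 nz by (simp add: gprod_def)
  next
    case 3
    then have "{u+1..l-1} = insert (u+1) {2+u..l-1}" by auto
    then show ?thesis using 3 nz by (simp add: gprod_def inverse_mult_distrib field_simps)
  qed
qed

lemma gprod_empty: "gprod A l (l - 1) = 1"
  by (simp add: gprod_def)

lemma gprod_split: "(\<And>j. A j \<noteq> 0) \<Longrightarrow> gprod A l u = gprod A 0 u / gprod A 0 (l - 1)"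
proof (induction u rule: int_induct[where k="l - 1"])
  case base
  then show ?case using gprod_nz[of A 0 "l-1"] by (simp add: gprod_empty)
next
  case (step1 i)
  then show ?case using gprod_step[of A l i] gprod_step[of A 0 i] by simp
next
  case (step2 i)
  then show ?case using gprod_step[of A l "i - 1"] gprod_step[of A 0 "i - 1"] gprod_nz[of A]
    by (simp add: field_simps)
qed

lemma gprod_add: "(\<And>j. A j \<noteq> 0) \<Longrightarrow> gprod A a b * gprod A (b+1) c = gprod A a c"
proof -
  assume nz: "\<And>j. A j \<noteq> 0"
  have "gprod A a b * gprod A (b+1) c = (gprod A 0 b / gprod A 0 (a-1)) * (gprod A 0 c / gprod A 0 b)"
    using gprod_split[of A a b, OF nz] gprod_split[of A "b+1" c, OF nz] by simp
  also have "\<dots> = gprod A 0 c / gprod A 0 (a-1)" using gprod_nz[of A 0 b, OF nz] by (simp add: field_simps)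
  also have "\<dots> = gprod A a c" using gprod_split[of A a c, OF nz] by simp
  finally show ?thesis .
qed

lemma gprod_shift: "gprod (\<lambda>i. f (i + c)) 1 t = gprod f (1 + c) (t + c)"
  by (simp add: gprod_def; intro conjI impI; 
      rule prod.reindex_bij_witness[of _ "\<lambda>i. i - c" "\<lambda>i. i + c"]; auto)

lemma gprod_one: "gprod (\<lambda>i. 1) l u = 1"
  by (simp add: gprod_def)



lemma WW_nz: "(\<And>s t. w s t \<noteq> 0) \<Longrightarrow> WW w s t \<noteq> 0"
  unfolding WW_def by (rule gprod_nz) auto

lemma WW_0 [simp]: "WW w s 0 = 1"
  by (simp add: WW_def gprod_def)

lemma fam_rec_full:
  assumes fam: "is_wbinom_family w B"
  shows "B (n+1) k = B n k + B n (k-1) * WW w k (n+1-k) - (if n + 1 = 0 \<and> k = 0 then 1 else 0)"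
proof (cases "n + 1 = 0 \<and> k = 0")
  case True
  then have "n = -1" "k = 0" by auto
  moreover have "B (-1) 0 = 1" "B (-1) (-1) = 1" "B 0 0 = 1" using fam unfolding is_wbinom_family_def by auto
  ultimately show ?thesis by simp
next
  case False
  then show ?thesis using fam unfolding is_wbinom_family_def by auto
qed

lemma fam_0: "is_wbinom_family w B \<Longrightarrow> B n 0 = 1"
  unfolding is_wbinom_family_def by auto

lemma fam_diag: "is_wbinom_family w B \<Longrightarrow> B n n = 1"
  unfolding is_wbinom_family_def by auto

lemma fam_above:
  assumes fam: "is_wbinom_family w B" and "m \<noteq> -1"
  shows "B m (m+1) = 0"
proof -
  have "B (m+1) (m+1) = B m (m+1) + B m m * WW w (m+1) 0"
    using fam assms(2) fam_rec_full[OF fam, of m "m+1"] by simp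
  then show ?thesis using fam_diag[OF fam, of m] fam_diag[OF fam, of "m+1"] by simp
qed

lemma fam_above': "is_wbinom_family w B \<Longrightarrow> B m (m+1) = (if m = -1 then 1 else 0)"
  using fam_above[of w B m] fam_0[of w B "-1"] by auto

lemma fam_neg:
  assumes fam: "is_wbinom_family w B" and nz: "\<And>s t. w s t \<noteq> 0"
  shows "n \<ge> 0 \<Longrightarrow> k < 0 \<Longrightarrow> B n k = 0"
proof -
  have main: "\<forall>n\<ge>0. B n (-1 - int d) = 0" for d
  proof (induction d)
    case 0
    show ?case
    proof (intro allI impI)
      fix n :: int assume "n \<ge> 0"
      have "B (n+1) 0 = B n 0 + B n (-1) * WW w 0 (n+1)"
        using fam_rec_full[OF fam, of n 0] \<open>n \<ge> 0\<close> by simp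
      then have "B n (-1) * WW w 0 (n+1) = 0" using fam_0[OF fam] by simp
      then show "B n (-1 - int 0) = 0" using WW_nz[OF nz] by simp
    qed
  next
    case (Suc d)
    show ?case
    proof (intro allI impI)
      fix n :: int assume "n \<ge> 0"
      have "B (n+1) (-1 - int d) = B n (-1 - int d) + B n (-1 - int d - 1) * WW w (-1 - int d) (n+1-(-1 - int d))"
        using fam_rec_full[OF fam, of n "-1 - int d"] by simp
      then have "B n (-1 - int d - 1) * WW w (-1 - int d) (n+1-(-1 - int d)) = 0"
        using Suc \<open>n \<ge> 0\<close> by simp
      then have "B n (-1 - int d - 1) = 0" using WW_nz[OF nz] by simp
      then show "B n (-1 - int (Suc d)) = 0" by (simp add: algebra_simps)
    qed
  qed
  assume "n \<ge> 0" "k < 0"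
  then show ?thesis using main[of "nat (-1-k)"] by auto
qed

fun cpos :: "(int \<Rightarrow> int \<Rightarrow> 'a::field) \<Rightarrow> nat \<Rightarrow> int \<Rightarrow> 'a" where
  "cpos w 0 n = 1"
| "cpos w (Suc d) n = 1 + gsum (\<lambda>j. cpos w d j * WW w (int d + 1) (j - int d)) (int d + 1) (n - 1)"

fun cneg :: "(int \<Rightarrow> int \<Rightarrow> 'a::field) \<Rightarrow> nat \<Rightarrow> int \<Rightarrow> 'a" where
  "cneg w 0 n = (if n = -1 then 1 else 0)"
| "cneg w (Suc d) n = (cneg w d (n+1) - cneg w d n) / WW w (-1 - int d) (n + 2 + int d)"

definition bfam :: "(int \<Rightarrow> int \<Rightarrow> 'a::field) \<Rightarrow> int \<Rightarrow> int \<Rightarrow> 'a" where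
  "bfam w n k = (if k \<ge> 0 then cpos w (nat k) n else cneg w (nat (-k-1)) n)"

lemma cneg_zero: "n < -1 - int d \<or> n \<ge> 0 \<Longrightarrow> cneg w d n = 0"
  by (induction d arbitrary: n) auto

lemma cneg_diag: "cneg w d (-1 - int d) = 1"
proof (induction d)
  case 0 then show ?case by simp
next
  case (Suc d)
  have "cneg w d (- int d - 2) = 0" by (rule cneg_zero) simp
  then show ?case using Suc by (simp add: algebra_simps)
qed

lemma bfam_family:
  assumes nz: "\<And>s t. w s t \<noteq> 0"
  shows "is_wbinom_family w (bfam w)"
  unfolding is_wbinom_family_def
proof (intro conjI allI impI)
  fix n :: int
  show "bfam w n 0 = 1" by (simp add: bfam_def)
  show "bfam w n n = 1"
  proof (cases "n \<ge> 0")
    case True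
    then show ?thesis
    proof (cases "n = 0")
      case False
      define d where "d = nat (n - 1)"
      have d: "nat n = Suc d" "n = int d + 1" using True False by (auto simp: d_def)
      have "bfam w n n = cpos w (Suc d) n" using True d(1) by (simp add: bfam_def)
      also have "\<dots> = 1" using d(2) by (simp add: gsum_def)
      finally show ?thesis .
    qed (simp add: bfam_def)
  next
    case False
    then have "n = -1 - int (nat (-n-1))" by simp
    then have "cneg w (nat (-n-1)) n = 1" using cneg_diag[of w "nat (-n-1)"] by simp
    then show ?thesis using False by (simp add: bfam_def)
  qed
next
  fix n k :: int
  assume ex: "(n + 1, k) \<noteq> (0, 0)"
  consider "k \<ge> 1" | "k = 0" | "k \<le> -1" by linarith
  then show "bfam w (n + 1) k = bfam w n k + bfam w n (k - 1) * WW w k (n + 1 - k)"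
  proof cases
    case 1
    obtain d where kd: "k = int d + 1" using 1 by (metis add.commute zle_iff_zadd)
    have "bfam w (n+1) k = 1 + gsum (\<lambda>j. cpos w d j * WW w (int d + 1) (j - int d)) (int d + 1) (n - 1 + 1)"
      unfolding kd bfam_def by (simp add: nat_add_distrib)
    also have "\<dots> = (1 + gsum (\<lambda>j. cpos w d j * WW w (int d + 1) (j - int d)) (int d + 1) (n - 1)) + cpos w d n * WW w (int d + 1) (n - int d)"
      by (subst gsum_step) simp
    also have "\<dots> = bfam w n k + bfam w n (k - 1) * WW w k (n + 1 - k)"
      unfolding kd bfam_def by (simp add: nat_add_distrib)
    finally show ?thesis .
  next
    case 2
    then have "n \<noteq> -1" using ex by auto
    then show ?thesis using 2 by (simp add: bfam_def)
  next
    case 3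
    obtain d where kd: "k = -1 - int d" using 3 by (metis add.commute diff_minus_eq_add minus_diff_eq zle_iff_zadd diff_add_cancel le_minus_iff neg_le_iff_le int_ops(1) nonneg_int_cases less_le_trans) 
    have e1: "nat (-(k-1)-1) = Suc d" "nat (-k-1) = d" unfolding kd by auto
    have "bfam w n (k-1) = (cneg w d (n+1) - cneg w d n) / WW w k (n + 1 - k)"
      using 3 unfolding bfam_def e1 by (simp add: kd algebra_simps)
    moreover have "bfam w (n+1) k = cneg w d (n+1)" "bfam w n k = cneg w d n"
      using 3 unfolding bfam_def e1 by auto
    ultimately show ?thesis using WW_nz[of w k "n+1-k", OF nz] by simp
  qed
qed


lemma fam_unique:
  assumes nz: "\<And>s t. w s t \<noteq> 0" and f1: "is_wbinom_family w B1" and f2: "is_wbinom_family w B2"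
  shows "B1 = B2"
proof -
  define D where "D n k = B1 n k - B2 n k" for n k
  have rec: "D (n+1) k = D n k + D n (k-1) * WW w k (n+1-k)" for n k
    unfolding D_def by (subst fam_rec_full[OF f1], subst fam_rec_full[OF f2]) (simp add: algebra_simps)
  have D0: "D n 0 = 0" for n using fam_0[OF f1] fam_0[OF f2] by (simp add: D_def)
  have Dd: "D n n = 0" for n using fam_diag[OF f1] fam_diag[OF f2] by (simp add: D_def)
  have pos: "\<forall>n. D n (int d) = 0" for d
  proof (induction d)
    case 0 then show ?case using D0 by simp
  next
    case (Suc d)
    show ?case
    proof
      fix n
      show "D n (int (Suc d)) = 0"
      proof (induction n rule: int_induct[where k="int (Suc d)"])
        case base then show ?case using Dd by simp
      next
        case (step1 i)
        then show ?case using rec[of i "int (Suc d)"] Suc by simp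
      next
        case (step2 i)
        then show ?case using rec[of "i-1" "int (Suc d)"] Suc by simp
      qed
    qed
  qed
  have neg: "\<forall>n. D n (-1 - int d) = 0" for d
  proof (induction d)
    case 0
    show ?case
    proof
      fix n
      have "D n (-1) * WW w 0 (n+1) = 0" using rec[of n 0] D0 by simp
      then show "D n (-1 - int 0) = 0" using WW_nz[OF nz] by simp
    qed
  next
    case (Suc d)
    show ?case
    proof
      fix n
      have "D n (-1 - int d - 1) * WW w (-1 - int d) (n+1-(-1 - int d)) = 0"
        using rec[of n "-1 - int d"] Suc by simp
      then show "D n (-1 - int (Suc d)) = 0" using WW_nz[OF nz] by (simp add: algebra_simps)
    qed
  qed
  have "D n k = 0" for n k
  proof (cases "k \<ge> 0")
    case True then show ?thesis using pos[of "nat k"] by simp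
  next
    case False then show ?thesis using neg[of "nat (-k-1)"] by simp
  qed
  then show ?thesis by (auto simp: D_def fun_eq_iff)
qed

lemma wbinom_family:
  assumes nz: "\<And>s t. w s t \<noteq> 0"
  shows "is_wbinom_family w (wbinom w)"
  unfolding wbinom_def
  by (rule theI[of "is_wbinom_family w" "bfam w"])
     (auto intro: bfam_family[OF nz] fam_unique[OF nz])



theorem corollary2:
  fixes w :: "int \<Rightarrow> int \<Rightarrow> complex" and n m k :: int
  assumes "\<And>s t. w s t \<noteq> 0"
    and "k \<le> n + m"
  shows "wbinom w (n + m) k =
    gsum (\<lambda>j. wbinom w n j * wbinom (\<lambda>s t. w (s + j) (t + (n - j))) m (k - j)
                 * gprod (\<lambda>i. WW w (i + j) (n - j)) 1 (k - j)) (k - m) n"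
proof -
  note nz = assms(1)
  define Bw where "Bw = wbinom w"
  define C where "C j = wbinom (\<lambda>s t. w (s + j) (t + (n - j)))" for j
  define P where "P j k = gprod (\<lambda>i. WW w (i + j) (n - j)) 1 (k - j)" for j k
  define F where "F m k j = Bw n j * C j m (k - j) * P j k" for m k j
  define R where "R m k = gsum (F m k) (k - m) n" for m k
  have famB: "is_wbinom_family w Bw" unfolding Bw_def by (rule wbinom_family[OF nz])
  have nzj: "(\<lambda>s t. w (s + j) (t + (n - j))) s t \<noteq> 0" for j s t using nz by simp
  have famC: "is_wbinom_family (\<lambda>s t. w (s + j) (t + (n - j))) (C j)" for j
    unfolding C_def by (rule wbinom_family) (simp add: nz)
  have WWnz: "WW w s t \<noteq> 0" for s t by (rule WW_nz[of w s t, OF nz])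
  have Pkk: "P j j = 1" for j by (simp add: P_def gprod_def)
  have Kkey: "WW (\<lambda>s t. w (s + j) (t + (n - j))) (k - j) t * P j k = P j (k - 1) * WW w k (t + (n - j))"
    for j k t
  proof -
    have 1: "WW (\<lambda>s t. w (s + j) (t + (n - j))) (k - j) t = gprod (w k) (1 + (n - j)) (t + (n - j))"
      unfolding WW_def using gprod_shift[of "w k" "n - j" t] by simp
    have 2: "P j k = P j (k - 1) * WW w k (n - j)"
      unfolding P_def using gprod_step[of "\<lambda>i. WW w (i + j) (n - j)" 1 "k - 1 - j"] WWnz by simp
    have 3: "WW w k (n - j) * gprod (w k) (n - j + 1) (t + (n - j)) = WW w k (t + (n - j))"
      unfolding WW_def using gprod_add[of "w k" 1 "n - j" "t + (n - j)"] nz by simp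
    show ?thesis unfolding 1 2 using 3 by (simp add: algebra_simps)
  qed
  have Fstep: "F (m+1) k j = F m k j + WW w k (n + m + 1 - k) * F m (k - 1) j
      - (if m = -1 \<and> j = k then Bw n k else 0)" for m k j
  proof -
    have c: "C j (m+1) (k-j) = C j m (k-j) + C j m (k-j-1) * WW (\<lambda>s t. w (s + j) (t + (n - j))) (k-j) (m+1-(k-j))
       - (if m + 1 = 0 \<and> k - j = 0 then 1 else 0)"
      using fam_rec_full[OF famC[of j], of m "k-j"] by simp
    have "F (m+1) k j = Bw n j * C j m (k-j) * P j k
       + Bw n j * C j m (k-j-1) * (WW (\<lambda>s t. w (s + j) (t + (n - j))) (k-j) (m+1-(k-j)) * P j k)
       - Bw n j * (if m + 1 = 0 \<and> k - j = 0 then 1 else 0) * P j k"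
      unfolding F_def c by (simp add: algebra_simps)
    also have "\<dots> = F m k j + Bw n j * C j m (k-j-1) * (P j (k - 1) * WW w k (n + m + 1 - k))
       - (if m = -1 \<and> j = k then Bw n k else 0)"
      unfolding Kkey by (auto simp: F_def Pkk algebra_simps)
    also have "\<dots> = F m k j + WW w k (n + m + 1 - k) * F m (k - 1) j
      - (if m = -1 \<and> j = k then Bw n k else 0)"
      by (simp add: F_def algebra_simps)
    finally show ?thesis .
  qed
  have Rrec: "R (m+1) k = R m k + WW w k (n + m + 1 - k) * R m (k - 1)" if "k \<le> n + m" for m k
  proof -
    have "R (m+1) k = gsum (\<lambda>j. F m k j + WW w k (n + m + 1 - k) * F m (k - 1) j
      - (if m = -1 \<and> j = k then Bw n k else 0)) (k - m - 1) n"
      unfolding R_def diff_diff_eq[symmetric] by (rule gsum_cong) (rule Fstep)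
    also have "\<dots> = gsum (F m k) (k - m - 1) n + WW w k (n + m + 1 - k) * gsum (F m (k - 1)) (k - m - 1) n
        - gsum (\<lambda>j. if m = -1 \<and> j = k then Bw n k else 0) (k - m - 1) n"
      by (simp add: gsum_add gsum_diff gsum_cmult)
    also have "gsum (F m k) (k - m - 1) n = F m k (k - m - 1) + R m k"
      unfolding R_def using gsum_low[of "F m k" "k - m" n] by simp
    also have "gsum (F m (k - 1)) (k - m - 1) n = R m (k - 1)"
      unfolding R_def by (simp add: algebra_simps)
    also have "F m k (k - m - 1) = (if m = -1 then Bw n k else 0)"
    proof (cases "m = -1")
      case True
      then show ?thesis using fam_above'[OF famC[of k], of "-1"] by (simp add: F_def Pkk)
    next
      case False
      then show ?thesis using fam_above'[OF famC[of "k - m - 1"], of m] by (simp add: F_def)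
    qed
    also have "gsum (\<lambda>j. if m = -1 \<and> j = k then Bw n k else 0) (k - m - 1) n = (if m = -1 then Bw n k else 0)"
    proof (cases "m = -1")
      case True
      then show ?thesis using that gsum_delta[of k n "Bw n k"] by simp
    next
      case False
      then show ?thesis by (simp add: gsum_def)
    qed
    finally show ?thesis by simp
  qed
  have Lrec: "Bw (n + (m+1)) k = Bw (n + m) k + WW w k (n + m + 1 - k) * Bw (n + m) (k - 1)"
    if "k \<le> n + m" for m k
  proof -
    have c: "(if n + m + 1 = 0 \<and> k = 0 then (1::complex) else 0) = 0" using that by auto
    have "Bw (n + m + 1) k = Bw (n + m) k + Bw (n + m) (k - 1) * WW w k (n + m + 1 - k)"
      using fam_rec_full[OF famB, of "n + m" k] unfolding c by simp
    then show ?thesis by (simp add: algebra_simps)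
  qed
  have Rdiag: "R m (n + m) = 1" for m
  proof -
    have "R m (n + m) = F m (n + m) n" unfolding R_def by (simp add: gsum_single)
    also have "\<dots> = 1" unfolding F_def P_def using fam_diag[OF famB, of n] fam_diag[OF famC[of n], of m]
      by (simp add: gprod_one)
    finally show ?thesis .
  qed
  have Ldiag: "Bw (n + m) (n + m) = 1" for m using fam_diag[OF famB] by simp
  have Rbase: "R 0 k = Bw n k" if "k \<le> n" for k
  proof -
    have "R 0 k = F 0 k k + gsum (F 0 k) (k + 1) n"
      unfolding R_def using gsum_low[of "F 0 k" "k + 1" n] by simp
    also have "gsum (F 0 k) (k + 1) n = 0"
      using that by (auto simp: gsum_def F_def fam_neg[OF famC nzj] intro!: sum.neutral)
    also have "F 0 k k = Bw n k" by (simp add: F_def Pkk fam_0[OF famC])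
    finally show ?thesis by simp
  qed
  have main: "\<forall>k. k \<le> n + m \<longrightarrow> Bw (n + m) k = R m k" for m
  proof (induction m rule: int_induct[where k=0])
    case base
    then show ?case using Rbase by simp
  next
    case (step1 i)
    show ?case
    proof (intro allI impI)
      fix k assume k: "k \<le> n + (i + 1)"
      show "Bw (n + (i + 1)) k = R (i + 1) k"
      proof (cases "k = n + (i + 1)")
        case True
        then show ?thesis using Ldiag[of "i+1"] Rdiag[of "i+1"] by simp
      next
        case False
        then have "k \<le> n + i" using k by simp
        then show ?thesis using Lrec[of k i] Rrec[of k i] step1(2) by simp
      qed
    qed
  next
    case (step2 i)
    have e: "Bw (n + (i - 1)) (n + (i - 1) - int e) = R (i - 1) (n + (i - 1) - int e)" for e
    proof (induction e)
      case 0
      then show ?case using Ldiag[of "i - 1"] Rdiag[of "i - 1"] by simp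
    next
      case (Suc e)
      define k where "k = n + (i - 1) - int e"
      have k: "k \<le> n + (i - 1)" unfolding k_def by simp
      have "Bw (n + (i - 1 + 1)) k = R (i - 1 + 1) k" using step2(2) k by simp
      then have "WW w k (n + (i - 1) + 1 - k) * Bw (n + (i - 1)) (k - 1) = WW w k (n + (i - 1) + 1 - k) * R (i - 1) (k - 1)"
        using Lrec[OF k] Rrec[OF k] Suc by (simp add: k_def)
      then have "Bw (n + (i - 1)) (k - 1) = R (i - 1) (k - 1)" using WWnz by simp
      then show ?case by (simp add: k_def algebra_simps)
    qed
    show ?case
    proof (intro allI impI)
      fix k assume "k \<le> n + (i - 1)"
      then show "Bw (n + (i - 1)) k = R (i - 1) k" using e[of "nat (n + (i - 1) - k)"] by simp
    qed
  qed
  show ?thesis using main[of m] assms(2) unfolding R_def F_def P_def C_def Bw_def by simp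
qed

end
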